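(* Consider the real ODE system $$\frac{dp}{dt}=p\,(pR(v_c)-Q(v_c)),\qquad \frac{dv_c}{dt}=-\frac{p}{4}(1+v_c^2)+\frac12(1-v_c^2),$$ with $R(v)=\frac12\left(\frac1v-v\right)$, $Q(v)=\frac12\left(\frac1v+v\right)$. Fix $c_1$ with $0<c_1<\frac{3+\sqrt{73}}{8}$ and let $p_1(v)=1+c_1H(v-1)(v-1)$, $p_2(v)=-1-c_1H(1-v)(v^{-1}-1)$ for $v>0$, where $H$ is the Heaviside function, and $\Omega=\{(v,p):v>0,\ p_2(v)\le p\le p_1(v)\}$. Then for every initial datum $(v_c(0),p(0))\in\Omega$ the solution exists for all $t>0$, satisfies $(v_c(t),p(t))\in\Omega$ for all $t>0$, $v_c(t)$ stays bounded away from $0$ and from $\infty$, and $p(t)\to0$ as $t\to\infty$.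
   Context: This system is the form, with dissipation coefficient normalized to $\nu=1$, of the pole-dynamics ODEs for the generalized Constantin–Lax–Majda equation with $a=1/2$, $\sigma=1$, written in the variable $p=\omega_{-2,i}/(v_c(1-v_c^2))$, where $v_c>0$ is the pole position parameter and $\omega_{-2,i}$ the real double-pole amplitude. *)

theory Defs
  imports "HOL-Analysis.Analysis"
begin

definition heaviside :: "real \<Rightarrow> real" where
  "heaviside x = (if x \<ge> 0 then 1 else 0)"

definition Rf :: "real \<Rightarrow> real" where
  "Rf v = (1/v - v) / 2"

definition Qf :: "real \<Rightarrow> real" where
  "Qf v = (1/v + v) / 2"

definition p1 :: "real \<Rightarrow> real \<Rightarrow> real" where
  "p1 c1 v = 1 + c1 * heaviside (v - 1) * (v - 1)"

definition p2 :: "real \<Rightarrow> real \<Rightarrow> real" where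
  "p2 c1 v = -1 - c1 * heaviside (1 - v) * (1/v - 1)"

definition Omega :: "real \<Rightarrow> (real \<times> real) set" where
  "Omega c1 = {(v, p). v > 0 \<and> p2 c1 v \<le> p \<and> p \<le> p1 c1 v}"

end

theory Submission
  imports Defs "HOL-Real_Asymp.Real_Asymp"
begin


primrec pic :: "('a::banach \<Rightarrow> 'a) \<Rightarrow> 'a \<Rightarrow> nat \<Rightarrow> real \<Rightarrow> 'a" where
  "pic f x0 0 = (\<lambda>t. x0)"
| "pic f x0 (Suc n) = (\<lambda>t. x0 + integral {0..t} (\<lambda>s. f (pic f x0 n s)))"

declare pic.simps(2)[simp del]

lemma pic_cont:
  assumes cf: "continuous_on UNIV f"
  shows "continuous_on {0..T} (pic f x0 n)"
proof (induction n)
  case 0 then show ?case by (simp add: continuous_on_const)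
next
  case (Suc n)
  have "continuous_on {0..T} (\<lambda>s. f (pic f x0 n s))"
    by (rule continuous_on_compose2[OF cf Suc]) auto
  then have "(\<lambda>s. f (pic f x0 n s)) integrable_on {0..T}"
    by (rule integrable_continuous_interval)
  then have "continuous_on {0..T} (\<lambda>t. integral {0..t} (\<lambda>s. f (pic f x0 n s)))"
    by (rule indefinite_integral_continuous_1)
  then show ?case by (auto intro!: continuous_intros simp: pic.simps(2))
qed

lemma pic_bound:
  fixes f :: "'a::banach \<Rightarrow> 'a"
  assumes lip: "\<And>x y. norm (f x - f y) \<le> L * norm (x - y)" and L: "L > 0"
  shows "t \<ge> 0 \<Longrightarrow> norm (pic f x0 (Suc n) t - pic f x0 n t) \<le> norm (f x0) * L^n * t^(Suc n) / fact (Suc n)"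
proof (induction n arbitrary: t)
  case 0
  then show ?case by (simp add: pic.simps(2))
next
  case (Suc n)
  have cf: "continuous_on UNIV f"
    by (rule lipschitz_on_continuous_on[of L]) (auto simp: lipschitz_on_def dist_norm lip less_imp_le[OF L])
  let ?N = "norm (f x0)"
  have c1: "continuous_on {0..t} (\<lambda>s. f (pic f x0 m s))" for m
    by (rule continuous_on_compose2[OF cf pic_cont[OF cf]]) auto
  have i1: "(\<lambda>s. f (pic f x0 m s)) integrable_on {0..t}" for m
    by (rule integrable_continuous_interval[OF c1])
  have eq: "pic f x0 (Suc (Suc n)) t - pic f x0 (Suc n) t
      = integral {0..t} (\<lambda>s. f (pic f x0 (Suc n) s) - f (pic f x0 n s))"
  proof -
    have "pic f x0 (Suc (Suc n)) t = x0 + integral {0..t} (\<lambda>s. f (pic f x0 (Suc n) s))"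
      by (simp only: pic.simps(2)[of f x0 "Suc n"])
    moreover have "pic f x0 (Suc n) t = x0 + integral {0..t} (\<lambda>s. f (pic f x0 n s))"
      by (simp only: pic.simps(2)[of f x0 n])
    ultimately show ?thesis using integral_diff[OF i1[of "Suc n"] i1[of n]] by simp
  qed
  define g where "g s = ?N * L^(Suc n) * s^(Suc n) / fact (Suc n)" for s
  define c where "c = ?N * L^(Suc n) / ((real n + 2) * fact (Suc n))"
  define G where "G s = c * s^(Suc (Suc n))" for s
  have gi: "(g has_integral (G t - G 0)) {0..t}"
  proof (rule fundamental_theorem_of_calculus)
    show "0 \<le> t" using Suc.prems .
    fix x assume "x \<in> {0..t}"
    have "(G has_real_derivative c * (real (Suc (Suc n)) * x^(Suc n))) (at x within {0..t})"
      unfolding G_def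
      by (rule derivative_eq_intros refl)+ simp
    moreover have "c * (real (Suc (Suc n)) * x^(Suc n)) = g x"
      proof -
      have "real (Suc (Suc n)) = real n + 2" by simp
      moreover have "real n + 2 > 0" by simp
      ultimately show ?thesis unfolding c_def g_def
        by (simp only:) (simp add: divide_simps del: fact_Suc of_nat_Suc)
    qed
    ultimately have "(G has_real_derivative g x) (at x within {0..t})" by simp
    then show "(G has_vector_derivative g x) (at x within {0..t})"
      by (simp add: has_real_derivative_iff_has_vector_derivative)
  qed
  have "norm (integral {0..t} (\<lambda>s. f (pic f x0 (Suc n) s) - f (pic f x0 n s))) \<le> integral {0..t} g"
  proof (rule integral_norm_bound_integral)
    show "(\<lambda>s. f (pic f x0 (Suc n) s) - f (pic f x0 n s)) integrable_on {0..t}"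
      by (rule integrable_diff[OF i1 i1])
    show "g integrable_on {0..t}" using gi by blast
    fix s assume s: "s \<in> {0..t}"
    have "norm (f (pic f x0 (Suc n) s) - f (pic f x0 n s)) \<le> L * norm (pic f x0 (Suc n) s - pic f x0 n s)"
      by (rule lip)
    also have "\<dots> \<le> L * (?N * L^n * s^(Suc n) / fact (Suc n))"
      using mult_left_mono[OF Suc.IH[of s], of L] s L by auto
    also have "\<dots> = g s" by (simp add: g_def)
    finally show "norm (f (pic f x0 (Suc n) s) - f (pic f x0 n s)) \<le> g s" .
  qed
  also have "integral {0..t} g = G t" using gi by (simp add: integral_unique G_def)
  finally show ?case using eq by (simp add: G_def c_def fact_Suc[of "Suc n"] add.commute del: fact_Suc)
qed

lemma picard_exists:
  fixes f :: "'a::banach \<Rightarrow> 'a"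
  assumes lip: "\<And>x y. norm (f x - f y) \<le> L * norm (x - y)" and L: "L > 0"
  shows "\<exists>y. y 0 = x0 \<and> (\<forall>t\<ge>0. (y has_vector_derivative f (y t)) (at t within {0..}))"
proof -
  have cf: "continuous_on UNIV f"
    by (rule lipschitz_on_continuous_on[of L]) (auto simp: lipschitz_on_def dist_norm lip less_imp_le[OF L])
  let ?N = "norm (f x0)"
  define D where "D i t = pic f x0 (Suc i) t - pic f x0 i t" for i t
  define Y where "Y t = x0 + (\<Sum>i. D i t)" for t
  have ul: "uniform_limit {0..T} (pic f x0) Y sequentially" if T: "T \<ge> 0" for T
  proof -
    have "uniform_limit {0..T} (\<lambda>n t. \<Sum>i<n. D i t) (\<lambda>t. \<Sum>i. D i t) sequentially"
    proof (rule Weierstrass_m_test)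
      fix n t assume t: "t \<in> {0..T}"
      have "norm (D n t) \<le> ?N * L^n * t^(Suc n) / fact (Suc n)"
        unfolding D_def using t by (intro pic_bound[OF lip L]) auto
      also have "\<dots> \<le> ?N * L^n * T^(Suc n) / fact (Suc n)"
        using t L by (intro divide_right_mono mult_left_mono power_mono) auto
      also have "\<dots> \<le> ?N * L^n * T^(Suc n) / fact n"
        using t L T by (intro divide_left_mono) (auto simp: fact_mono)
      also have "\<dots> = ?N * T * (inverse (fact n) * (L*T)^n)"
        by (simp add: field_simps power_mult_distrib)
      finally show "norm (D n t) \<le> ?N * T * (inverse (fact n) * (L*T)^n)" .
    next
      show "summable (\<lambda>n. ?N * T * (inverse (fact n) * (L*T)^n))"
        by (intro summable_mult summable_exp)
    qed
    then have "uniform_limit {0..T} (\<lambda>n t. x0 + (\<Sum>i<n. D i t)) Y sequentially"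
      unfolding uniform_limit_iff Y_def by (simp add: dist_norm)
    moreover have "x0 + (\<Sum>i<n. D i t) = pic f x0 n t" for n t
      unfolding D_def using sum_lessThan_telescope[of "\<lambda>i. pic f x0 i t" n] by simp
    ultimately show ?thesis by simp
  qed
  have contY: "continuous_on {0..T} Y" if "T \<ge> 0" for T
    by (rule uniform_limit_theorem[OF _ ul[OF that]]) (auto simp: pic_cont[OF cf])
  have contfY: "continuous_on {0..T} (\<lambda>s. f (Y s))" if "T \<ge> 0" for T
    by (rule continuous_on_compose2[OF cf contY[OF that]]) auto
  have inteq: "Y t = x0 + integral {0..t} (\<lambda>s. f (Y s))" if t: "t \<ge> 0" for t
  proof -
    have l1: "(\<lambda>n. pic f x0 (Suc n) t) \<longlonglongrightarrow> Y t"
      using LIMSEQ_Suc[OF tendsto_uniform_limitI[OF ul[OF t]]] t by auto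
    have ci: "continuous_on {0..t} (\<lambda>s. f (pic f x0 n s))" for n
      by (rule continuous_on_compose2[OF cf pic_cont[OF cf]]) auto
    have l2: "(\<lambda>n. integral {0..t} (\<lambda>s. f (pic f x0 n s))) \<longlonglongrightarrow> integral {0..t} (\<lambda>s. f (Y s))"
    proof (rule tendstoI)
      fix e :: real assume e: "e > 0"
      define e' where "e' = e / (L * (t + 1))"
      have e': "e' > 0" using e L t by (simp add: e'_def)
      show "\<forall>\<^sub>F n in sequentially. dist (integral {0..t} (\<lambda>s. f (pic f x0 n s))) (integral {0..t} (\<lambda>s. f (Y s))) < e"
        using uniform_limitD[OF ul[OF t] e']
      proof eventually_elim
        case (elim n)
        have "dist (integral {0..t} (\<lambda>s. f (pic f x0 n s))) (integral {0..t} (\<lambda>s. f (Y s)))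
            = norm (integral {0..t} (\<lambda>s. f (pic f x0 n s) - f (Y s)))"
          by (simp add: dist_norm integral_diff integrable_continuous_interval ci contfY[OF t])
        also have "\<dots> \<le> integral {0..t} (\<lambda>s. L * e')"
        proof (rule integral_norm_bound_integral)
          show "(\<lambda>s. f (pic f x0 n s) - f (Y s)) integrable_on {0..t}"
            by (intro integrable_diff integrable_continuous_interval ci contfY[OF t])
          fix s assume s: "s \<in> {0..t}"
          have "norm (f (pic f x0 n s) - f (Y s)) \<le> L * norm (pic f x0 n s - Y s)" by (rule lip)
          also have "\<dots> \<le> L * e'" using elim s L by (auto simp: dist_norm intro!: mult_left_mono less_imp_le)
          finally show "norm (f (pic f x0 n s) - f (Y s)) \<le> L * e'" .
        qed auto
        also have "\<dots> = t * (L * e')" using t by simp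
        also have "\<dots> = e * (t / (t+1))"
        proof -
          have "t + 1 \<noteq> 0" "L \<noteq> 0" "L + L * t \<noteq> 0" using t L by (auto, metis add_pos_nonneg less_numeral_extra(3) mult_nonneg_nonneg less_imp_le)
          then show ?thesis by (simp add: e'_def field_simps)
        qed
        also have "\<dots> < e" using mult_strict_left_mono[of "t/(t+1)" 1 e] e t by simp
        finally show ?case .
      qed
    qed
    have "(\<lambda>n. pic f x0 (Suc n) t) \<longlonglongrightarrow> x0 + integral {0..t} (\<lambda>s. f (Y s))"
      unfolding pic.simps(2) by (intro tendsto_intros l2)
    with l1 show ?thesis using LIMSEQ_unique by blast
  qed
  have "Y 0 = x0" using inteq[of 0] by simp
  moreover have "(Y has_vector_derivative f (Y t)) (at t within {0..})" if t: "t \<ge> 0" for t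
  proof -
    have "((\<lambda>u. x0 + integral {0..u} (\<lambda>s. f (Y s))) has_vector_derivative f (Y t)) (at t within {0..t+1})"
      using integral_has_vector_derivative[OF contfY[of "t+1"], of t] t
      by (auto intro!: derivative_eq_intros)
    then have "(Y has_vector_derivative f (Y t)) (at t within {0..t+1})"
      by (rule has_vector_derivative_transform[rotated 2]) (use t inteq in auto)
    moreover have "at t within {0..t+1} = at t within {0..}"
      by (rule at_within_nhd[of _ "{..<t+1}"]) auto
    ultimately show ?thesis by simp
  qed
  ultimately show ?thesis by blast
qed



definition FV :: "real \<Rightarrow> real \<Rightarrow> real" where
  "FV v p = - p / 4 * (1 + v\<^sup>2) + (1 - v\<^sup>2) / 2"
definition FP :: "real \<Rightarrow> real \<Rightarrow> real" where
  "FP v p = p * (p * Rf v - Qf v)"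

lemma poly_neg:
  fixes c w :: real
  assumes c: "0 < c" "4*c^2 - 3*c - 4 < 0" and w: "w \<ge> 0"
  shows "(2*c - 4) + (2*c^2+4*c-8) * w + (4*c^2-3*c-4) * w^2 + (-3*c - c^2) * w^3 + (- (c^2)) * w^4 < 0"
proof -
  have c32: "c < 3/2"
  proof (rule ccontr)
    assume "\<not> c < 3/2"
    then have "c \<ge> 3/2" by simp
    then have "c * (4*c - 3) \<ge> 3/2 * 3" by (intro mult_mono) auto
    then show False using c by (simp add: power2_eq_square algebra_simps)
  qed
  define A1 where "A1 = 2*c^2+4*c-8"
  define A2 where "A2 = 4*c^2-3*c-4"
  define A3 where "A3 = -3*c - c^2"
  have t2: "A2 * w^2 \<le> 0" unfolding A2_def using c w by (intro mult_nonpos_nonneg) auto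
  have t4: "(- (c^2)) * w^4 \<le> 0" using w by simp
  have t3: "A3 * w^3 \<le> 0" unfolding A3_def using c w by (intro mult_nonpos_nonneg) (use zero_le_power2[of c] in linarith, simp)
  have A1b: "A1 < 5/2"
  proof -
    have "c^2 < (3/2)^2" using c c32 by (intro power_strict_mono) auto
    then show ?thesis unfolding A1_def using c32 by (simp add: power2_eq_square)
  qed
  show ?thesis
  proof (cases "A1 \<le> 0")
    case True
    then have "A1 * w \<le> 0" using w by (simp add: mult_nonpos_nonneg)
    then show ?thesis using t2 t3 t4 c32 unfolding A1_def[symmetric] A2_def[symmetric] A3_def[symmetric] by linarith
  next
    case False
    have c78: "c > 7/8"
    proof (rule ccontr)
      assume "\<not> c > 7/8"
      then have "c \<le> 7/8" by simp
      then have "c^2 \<le> (7/8)^2" using c by (intro power_mono) auto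
      then show False using False \<open>c \<le> 7/8\<close> unfolding A1_def by (simp add: power2_eq_square)
    qed
    have A3b: "A3 \<le> -(24/5)"
      using False c78 unfolding A1_def A3_def by simp
    have e1: "A1 * w \<le> 5/2 * w" using A1b w by (intro mult_right_mono) auto
    have e3: "A3 * w^3 \<le> -(24/5) * w^3" using A3b w by (intro mult_right_mono) auto
    have cub: "0 \<le> (w - 21/50)^2 * (w + 21/25)" using w by simp
    have cub': "(w - 21/50)^2 * (w + 21/25) = w^3 - (1323/2500) * w + 9261/62500"
      by (simp add: power2_eq_square power3_eq_cube field_simps)
    have "c^2 * w^4 \<ge> 0" using w by simp
    then show ?thesis using t2 e1 e3 cub cub' c32 w
      unfolding A1_def[symmetric] A2_def[symmetric] A3_def[symmetric] by linarith
  qed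
qed

lemma up_ineq:
  fixes c v p :: real
  assumes c: "0 < c" "4*c^2 - 3*c - 4 < 0" and v: "1 \<le> v" and p: "p = 1 + c*(v-1)"
  shows "FP v p - c * FV v p < 0"
proof -
  define w where "w = v - 1"
  have w: "w \<ge> 0" "v = 1 + w" "p = 1 + c*w" using v p by (auto simp: w_def)
  have v0: "v \<noteq> 0" using v by simp
  have e1: "FP v p - c * FV v p = (2*p^2*(1-v^2) - 2*p*(1+v^2) + c * v * p*(1+v^2) - 2*c * v * (1-v^2)) / (4 * v)"
    unfolding FP_def FV_def Rf_def Qf_def using v0
    by (simp add: field_simps power2_eq_square)
  have e2: "2*p^2*(1-v^2) - 2*p*(1+v^2) + c * v * p*(1+v^2) - 2*c * v * (1-v^2) = (2*c - 4) + (2*c^2+4*c-8) * w + (4*c^2-3*c-4) * w^2 + (-3*c - c^2) * w^3 + (- (c^2)) * w^4"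
    unfolding w(2,3) by (simp add: algebra_simps power2_eq_square power3_eq_cube power4_eq_xxxx)
  show ?thesis unfolding e1 e2 using poly_neg[OF c w(1)] v by (simp add: divide_neg_pos)
qed

lemma lo_ineq:
  fixes c v p :: real
  assumes c: "0 < c" "4*c^2 - 3*c - 4 < 0" and v: "0 < v" "v \<le> 1" and p: "p = -1 - c*(1/v-1)"
  shows "FP v p - c * FV v p / v^2 > 0"
proof -
  have "FP (1/v) (-p) - c * FV (1/v) (-p) < 0"
    using v p by (intro up_ineq[OF c]) (auto simp: field_simps)
  moreover have "FP (1/v) (-p) - c * FV (1/v) (-p) = (-1) * (FP v p - c * FV v p / v^2)"
    unfolding FP_def FV_def Rf_def Qf_def using v by (simp add: field_simps power2_eq_square)
  ultimately show ?thesis by simp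
qed



definition inK :: "real \<Rightarrow> real \<Rightarrow> real \<Rightarrow> real \<Rightarrow> real \<Rightarrow> bool" where
  "inK c vlo vhi v p \<longleftrightarrow> vlo \<le> v \<and> v \<le> vhi \<and> p \<le> max 1 (1 + c * (v - 1))
     \<and> min (-1) (-1 - c * (1 / v - 1)) \<le> p"

lemma right_lt:
  fixes g :: "real \<Rightarrow> real"
  assumes "continuous (at t within {0..}) g" "g t < 0" "t \<ge> 0"
  shows "\<exists>d>0. \<forall>r. t < r \<and> r < t + d \<longrightarrow> g r < 0"
proof -
  have "\<forall>\<^sub>F r in at t within {0..}. g r < 0"
    using order_tendstoD(2)[OF assms(1)[unfolded continuous_within] assms(2)] .
  then obtain d where d: "d > 0" "\<And>r. r \<in> {0..} \<Longrightarrow> r \<noteq> t \<Longrightarrow> dist r t < d \<Longrightarrow> g r < 0"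
    unfolding eventually_at by blast
  show ?thesis
    using d assms(3) by (intro exI[of _ d]) (auto simp: dist_real_def)
qed

lemma right_dec:
  fixes g :: "real \<Rightarrow> real"
  assumes "(g has_real_derivative D) (at t within {0..})" "D < 0" "t \<ge> 0"
  shows "\<exists>d>0. \<forall>r. t < r \<and> r < t + d \<longrightarrow> g r < g t"
proof -
  obtain d where d: "d > 0" "\<And>h. h > 0 \<Longrightarrow> t + h \<in> {0..} \<Longrightarrow> h < d \<Longrightarrow> g t > g (t + h)"
    using has_real_derivative_neg_dec_right[OF assms(1,2)] by blast
  show ?thesis
  proof (intro exI[of _ d] conjI allI impI)
    fix r assume "t < r \<and> r < t + d"
    then show "g r < g t" using d(2)[of "r - t"] assms(3) by auto
  qed (use d in auto)
qed

lemma right_inc: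
  fixes g :: "real \<Rightarrow> real"
  assumes "(g has_real_derivative D) (at t within {0..})" "D > 0" "t \<ge> 0"
  shows "\<exists>d>0. \<forall>r. t < r \<and> r < t + d \<longrightarrow> g r > g t"
proof -
  obtain d where d: "d > 0" "\<And>h. h > 0 \<Longrightarrow> t + h \<in> {0..} \<Longrightarrow> h < d \<Longrightarrow> g t < g (t + h)"
    using has_real_derivative_pos_inc_right[OF assms(1,2)] by blast
  show ?thesis
  proof (intro exI[of _ d] conjI allI impI)
    fix r assume "t < r \<and> r < t + d"
    then show "g r > g t" using d(2)[of "r - t"] assms(3) by auto
  qed (use d in auto)
qed

lemma left_le:
  fixes g :: "real \<Rightarrow> real"
  assumes "continuous (at t within {0..}) g" "t > 0" "\<And>r. 0 \<le> r \<Longrightarrow> r < t \<Longrightarrow> g r \<le> 0"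
  shows "g t \<le> 0"
proof (rule ccontr)
  assume "\<not> g t \<le> 0"
  then have "\<forall>\<^sub>F r in at t within {0..}. g r > 0"
    using order_tendstoD(1)[OF assms(1)[unfolded continuous_within]] by simp
  then obtain d where d: "d > 0" "\<And>r. r \<in> {0..} \<Longrightarrow> r \<noteq> t \<Longrightarrow> dist r t < d \<Longrightarrow> g r > 0"
    unfolding eventually_at by blast
  define r where "r = max 0 (t - d/2)"
  have "g r > 0" using d assms(2) by (intro d(2)) (auto simp: r_def dist_real_def)
  moreover have "g r \<le> 0" using d assms(2) by (intro assms(3)) (auto simp: r_def)
  ultimately show False by simp
qed

lemma combine4:
  assumes "\<exists>d>0. \<forall>r. t < r \<and> r < t + d \<longrightarrow> P1 r"
    "\<exists>d>0. \<forall>r. t < r \<and> r < t + d \<longrightarrow> P2 r"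
    "\<exists>d>0. \<forall>r. t < r \<and> r < t + d \<longrightarrow> P3 r"
    "\<exists>d>0. \<forall>r. t < r \<and> r < t + d \<longrightarrow> P4 r"
  shows "\<exists>d>0. \<forall>r::real. t < r \<and> r < t + d \<longrightarrow> P1 r \<and> P2 r \<and> P3 r \<and> P4 r"
proof -
  from assms(1) obtain d1 where d1: "d1 > 0" "\<forall>r. t < r \<and> r < t + d1 \<longrightarrow> P1 r" by blast
  from assms(2) obtain d2 where d2: "d2 > 0" "\<forall>r. t < r \<and> r < t + d2 \<longrightarrow> P2 r" by blast
  from assms(3) obtain d3 where d3: "d3 > 0" "\<forall>r. t < r \<and> r < t + d3 \<longrightarrow> P3 r" by blast
  from assms(4) obtain d4 where d4: "d4 > 0" "\<forall>r. t < r \<and> r < t + d4 \<longrightarrow> P4 r" by blast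
  note d = d1 d2 d3 d4
  show ?thesis using d
    by (intro exI[of _ "min (min d1 d2) (min d3 d4)"]) auto
qed

lemma local_inv:
  fixes v p :: "real \<Rightarrow> real"
  assumes c: "0 < c" "4*c^2 - 3*c - 4 < 0"
    and lo: "0 < vlo" "vlo \<le> 1/2" and hi: "2 \<le> vhi"
    and t: "t \<ge> 0"
    and dv: "(v has_real_derivative FV (v t) (p t)) (at t within {0..})"
    and dp: "(p has_real_derivative FP (v t) (p t)) (at t within {0..})"
    and K: "inK c vlo vhi (v t) (p t)"
  shows "\<exists>d>0. \<forall>r. t < r \<and> r < t + d \<longrightarrow> inK c vlo vhi (v r) (p r)"
proof -
  have K1: "vlo \<le> v t" and K2: "v t \<le> vhi" and K3: "p t \<le> max 1 (1 + c * (v t - 1))"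
    and K4: "min (-1) (-1 - c * (1 / v t - 1)) \<le> p t" using K by (auto simp: inK_def)
  have vpos: "v t > 0" using K1 lo by simp
  have cv: "continuous (at t within {0..}) v" by (rule DERIV_continuous[OF dv])
  have cp: "continuous (at t within {0..}) p" by (rule DERIV_continuous[OF dp])
  have dinv: "((\<lambda>r. 1 / v r) has_real_derivative - FV (v t) (p t) / (v t)^2) (at t within {0..})"
    using vpos by (auto intro!: derivative_eq_intros dv simp: power2_eq_square)
  have cinv: "continuous (at t within {0..}) (\<lambda>r. 1 / v r)" by (rule DERIV_continuous[OF dinv])
  have P1: "\<exists>d>0. \<forall>r. t < r \<and> r < t + d \<longrightarrow> vlo \<le> v r"
  proof (cases "v t = vlo")
    case True
    have "c * (v t - 1) \<le> 0" using True lo c by (intro mult_nonneg_nonpos) auto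
    then have "p t \<le> 1" using K3 by (simp add: max_def split: if_splits)
    then have "p t * (1 + (v t)^2) \<le> 1 * (1 + (v t)^2)" by (intro mult_right_mono) auto
    moreover have "(v t)^2 \<le> (1/2)^2" using True lo by (intro power_mono) auto
    ultimately have "FV (v t) (p t) > 0" unfolding FV_def by (simp add: power2_eq_square)
    from right_inc[OF dv this t] show ?thesis using True by (metis less_imp_le)
  next
    case False
    have "continuous (at t within {0..}) (\<lambda>r. vlo - v r)" using cv by (intro continuous_intros)
    from right_lt[where g="\<lambda>r. vlo - v r", OF this _ t] show ?thesis using K1 False
      by (auto simp: less_imp_le)
  qed
  have P2: "\<exists>d>0. \<forall>r. t < r \<and> r < t + d \<longrightarrow> v r \<le> vhi"
  proof (cases "v t = vhi")
    case True
    have "1 / vhi \<le> 1" using hi by simp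
    then have "-1 - c * (1 / v t - 1) \<ge> -1" using True c by (simp add: mult_nonneg_nonpos)
    then have "p t \<ge> -1" using K4 by (simp add: min_def split: if_splits)
    then have "p t * (1 + (v t)^2) \<ge> (-1) * (1 + (v t)^2)" by (intro mult_right_mono) auto
    moreover have "(v t)^2 \<ge> 2^2" using True hi by (intro power_mono) auto
    ultimately have "FV (v t) (p t) < 0" unfolding FV_def by (simp add: power2_eq_square)
    from right_dec[OF dv this t] show ?thesis using True by (metis less_imp_le)
  next
    case False
    have "continuous (at t within {0..}) (\<lambda>r. v r - vhi)" using cv by (intro continuous_intros)
    from right_lt[where g="\<lambda>r. v r - vhi", OF this _ t] show ?thesis using K2 False
      by (auto simp: less_imp_le)
  qed
  have P3: "\<exists>d>0. \<forall>r. t < r \<and> r < t + d \<longrightarrow> p r \<le> max 1 (1 + c * (v r - 1))"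
  proof (cases "p t < max 1 (1 + c * (v t - 1))")
    case True
    have "continuous (at t within {0..}) (\<lambda>r. p r - max 1 (1 + c * (v r - 1)))" using cv cp by (intro continuous_intros)
    from right_lt[where g="\<lambda>r. p r - max 1 (1 + c * (v r - 1))", OF this _ t] show ?thesis using True
      by (auto simp: less_imp_le)
  next
    case False
    then have eq: "p t = max 1 (1 + c * (v t - 1))" using K3 by simp
    show ?thesis
    proof (cases "p t = 1")
      case True
      have "FP (v t) (p t) = - v t" unfolding True FP_def Rf_def Qf_def by (simp add: field_simps)
      then have "FP (v t) (p t) < 0" using vpos by simp
      from right_dec[OF dp this t] show ?thesis using True
        by (metis (no_types, lifting) less_imp_le max.cobounded1 order_trans)
    next
      case False
      then have pe: "p t = 1 + c * (v t - 1)" using eq by (auto simp: max_def split: if_splits)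
      have "p t \<ge> 1" using eq by simp
      then have "p t > 1" using False by simp
      then have "c * (v t - 1) > 0" using pe by simp
      then have v1: "v t \<ge> 1" using c by (simp add: zero_less_mult_iff)
      have "FP (v t) (p t) - c * FV (v t) (p t) < 0" by (rule up_ineq[OF c v1 pe])
      moreover have "((\<lambda>r. p r - c * (v r - 1)) has_real_derivative FP (v t) (p t) - c * FV (v t) (p t)) (at t within {0..})"
        by (auto intro!: derivative_eq_intros dv dp)
      ultimately obtain d where d: "d > 0" "\<forall>r. t < r \<and> r < t + d \<longrightarrow> p r - c * (v r - 1) < p t - c * (v t - 1)"
        using right_dec t by blast
      show ?thesis using d pe by (intro exI[of _ d]) (auto intro: order_trans[OF _ max.cobounded2] less_imp_le)
    qed
  qed
  have P4: "\<exists>d>0. \<forall>r. t < r \<and> r < t + d \<longrightarrow> min (-1) (-1 - c * (1 / v r - 1)) \<le> p r"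
  proof (cases "p t > min (-1) (-1 - c * (1 / v t - 1))")
    case True
    have "continuous (at t within {0..}) (\<lambda>r. min (-1) (-1 - c * (1 / v r - 1)) - p r)" using cinv cp cv vpos by (intro continuous_intros) auto
    from right_lt[where g="\<lambda>r. min (-1) (-1 - c * (1 / v r - 1)) - p r", OF this _ t] show ?thesis using True
      by (auto simp: less_imp_le)
  next
    case False
    then have eq: "p t = min (-1) (-1 - c * (1 / v t - 1))" using K4 by simp
    show ?thesis
    proof (cases "p t = -1")
      case True
      have "FP (v t) (p t) = 1 / v t" unfolding True FP_def Rf_def Qf_def by (simp add: field_simps)
      then have "FP (v t) (p t) > 0" using vpos by simp
      from right_inc[OF dp this t] show ?thesis using True
        by (metis (no_types, lifting) less_imp_le min.cobounded1 order_trans)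
    next
      case False
      then have pe: "p t = -1 - c * (1 / v t - 1)" using eq by (auto simp: min_def split: if_splits)
      have "p t \<le> -1" using eq by simp
      then have "p t < -1" using False by simp
      then have "c * (1 / v t - 1) > 0" using pe by simp
      then have "1 / v t > 1" using c by (simp add: zero_less_mult_iff)
      then have v1: "v t \<le> 1" using vpos by (simp add: field_simps)
      have "FP (v t) (p t) - c * FV (v t) (p t) / (v t)^2 > 0" by (rule lo_ineq[OF c vpos v1 pe])
      moreover have "((\<lambda>r. p r + c * (1 / v r - 1)) has_real_derivative FP (v t) (p t) - c * FV (v t) (p t) / (v t)^2) (at t within {0..})"
        using DERIV_add[OF dp DERIV_cmult[OF DERIV_diff[OF dinv DERIV_const[of 1]]], of c] by simp
      ultimately obtain d where d: "d > 0" "\<forall>r. t < r \<and> r < t + d \<longrightarrow> p r + c * (1 / v r - 1) > p t + c * (1 / v t - 1)"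
        using right_inc t by blast
      show ?thesis using d pe by (intro exI[of _ d]) (auto intro: order_trans[OF min.cobounded2] less_imp_le)
    qed
  qed
  show ?thesis using combine4[OF P1 P2 P3 P4] unfolding inK_def by simp
qed

lemma global_inv:
  fixes v p Dv Dp :: "real \<Rightarrow> real"
  assumes c: "0 < c" "4*c^2 - 3*c - 4 < 0"
    and lo: "0 < vlo" "vlo \<le> 1/2" and hi: "2 \<le> vhi"
    and dv: "\<And>t. t \<ge> 0 \<Longrightarrow> (v has_real_derivative Dv t) (at t within {0..})"
    and dp: "\<And>t. t \<ge> 0 \<Longrightarrow> (p has_real_derivative Dp t) (at t within {0..})"
    and eqK: "\<And>t. t \<ge> 0 \<Longrightarrow> inK c vlo vhi (v t) (p t) \<Longrightarrow> Dv t = FV (v t) (p t) \<and> Dp t = FP (v t) (p t)"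
    and K0: "inK c vlo vhi (v 0) (p 0)"
  shows "\<forall>t\<ge>0. inK c vlo vhi (v t) (p t)"
proof (rule ccontr)
  assume "\<not> ?thesis"
  then obtain t1 where t1: "t1 \<ge> 0" "\<not> inK c vlo vhi (v t1) (p t1)" by auto
  define S where "S = {s. 0 \<le> s \<and> s \<le> t1 \<and> (\<forall>r. 0 \<le> r \<and> r \<le> s \<longrightarrow> inK c vlo vhi (v r) (p r))}"
  define ts where "ts = Sup S"
  have S0: "0 \<in> S" using K0 t1 by (auto simp: S_def)
  have bdd: "bdd_above S" by (auto simp: S_def bdd_above_def)
  have ts0: "0 \<le> ts" unfolding ts_def using cSup_upper[OF S0 bdd] .
  have ts1: "ts \<le> t1" unfolding ts_def using S0 by (intro cSup_least) (auto simp: S_def)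
  have before: "inK c vlo vhi (v r) (p r)" if "0 \<le> r" "r < ts" for r
  proof -
    obtain s where "s \<in> S" "r < s" using less_cSupE[of r S] \<open>r < ts\<close> S0 unfolding ts_def by blast
    then show ?thesis using that by (auto simp: S_def)
  qed
  have Kts: "inK c vlo vhi (v ts) (p ts)"
  proof (cases "ts = 0")
    case True then show ?thesis using K0 by simp
  next
    case False
    then have tsp: "ts > 0" using ts0 by simp
    have cv: "continuous (at ts within {0..}) v" by (rule DERIV_continuous[OF dv[OF ts0]])
    have cp: "continuous (at ts within {0..}) p" by (rule DERIV_continuous[OF dp[OF ts0]])
    have bK: "\<And>r. 0 \<le> r \<Longrightarrow> r < ts \<Longrightarrow> vlo \<le> v r \<and> v r \<le> vhi \<and> p r \<le> max 1 (1 + c * (v r - 1))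
       \<and> min (-1) (-1 - c * (1 / v r - 1)) \<le> p r"
      using before unfolding inK_def by blast
    have "(\<lambda>r. vlo - v r) ts \<le> 0"
    proof (rule left_le[OF _ tsp])
      show "continuous (at ts within {0..}) (\<lambda>r. vlo - v r)" using cv by (intro continuous_intros)
    qed (use bK in force)
    then have k1: "vlo \<le> v ts" by simp
    have "(\<lambda>r. v r - vhi) ts \<le> 0"
    proof (rule left_le[OF _ tsp])
      show "continuous (at ts within {0..}) (\<lambda>r. v r - vhi)" using cv by (intro continuous_intros)
    qed (use bK in force)
    then have k2: "v ts \<le> vhi" by simp
    have "(\<lambda>r. p r - max 1 (1 + c * (v r - 1))) ts \<le> 0"
    proof (rule left_le[OF _ tsp])
      show "continuous (at ts within {0..}) (\<lambda>r. p r - max 1 (1 + c * (v r - 1)))" using cv cp by (intro continuous_intros)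
    qed (use bK in force)
    then have k3: "p ts \<le> max 1 (1 + c * (v ts - 1))" by simp
    have vts: "v ts \<noteq> 0" using k1 lo by simp
    have "(\<lambda>r. min (-1) (-1 - c * (1 / v r - 1)) - p r) ts \<le> 0"
    proof (rule left_le[OF _ tsp])
      show "continuous (at ts within {0..}) (\<lambda>r. min (-1) (-1 - c * (1 / v r - 1)) - p r)"
        using cv cp vts by (intro continuous_intros) auto
    qed (use bK in force)
    then have k4: "min (-1) (-1 - c * (1 / v ts - 1)) \<le> p ts" by simp
    show ?thesis using k1 k2 k3 k4 by (simp add: inK_def)
  qed
  have tst: "ts < t1" using ts1 Kts t1 by (cases "ts = t1") auto
  obtain d where d: "d > 0" "\<forall>r. ts < r \<and> r < ts + d \<longrightarrow> inK c vlo vhi (v r) (p r)"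
  proof -
    have dvs: "(v has_real_derivative FV (v ts) (p ts)) (at ts within {0..})"
      using dv[OF ts0] eqK[OF ts0 Kts] by simp
    have dps: "(p has_real_derivative FP (v ts) (p ts)) (at ts within {0..})"
      using dp[OF ts0] eqK[OF ts0 Kts] by simp
    show ?thesis using local_inv[OF c lo hi ts0 dvs dps Kts] that by blast
  qed
  define s where "s = min t1 (ts + d/2)"
  have "s \<in> S"
    unfolding S_def
  proof (intro CollectI conjI allI impI)
    show "0 \<le> s" "s \<le> t1" using ts0 t1 d by (auto simp: s_def)
    fix r assume r: "0 \<le> r \<and> r \<le> s"
    show "inK c vlo vhi (v r) (p r)"
    proof (cases "r < ts")
      case True then show ?thesis using before r by simp
    next
      case False
      show ?thesis
      proof (cases "r = ts")
        case True then show ?thesis using Kts by simp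
      next
        case False
        then show ?thesis using \<open>\<not> r < ts\<close> r d by (intro d(2)[rule_format]) (auto simp: s_def)
      qed
    qed
  qed
  then have "s \<le> ts" unfolding ts_def using bdd by (rule cSup_upper)
  moreover have "s > ts" using tst d by (auto simp: s_def)
  ultimately show False by simp
qed



definition lipB :: "(real \<times> real) set \<Rightarrow> (real \<times> real \<Rightarrow> real) \<Rightarrow> bool" where
  "lipB S g \<longleftrightarrow> (\<exists>K M. \<forall>x\<in>S. \<forall>y\<in>S. \<bar>g x\<bar> \<le> M \<and> \<bar>g x - g y\<bar> \<le> K * (\<bar>fst x - fst y\<bar> + \<bar>snd x - snd y\<bar>))"

lemma lipB_const: "lipB S (\<lambda>x. a)"
  unfolding lipB_def by (intro exI[of _ 0] exI[of _ "\<bar>a\<bar>"]) auto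

lemma lipB_fst: "lipB ({a..b} \<times> {c..d}) (\<lambda>x. fst x)"
  unfolding lipB_def by (intro exI[of _ 1] exI[of _ "\<bar>a\<bar> + \<bar>b\<bar>"]) auto

lemma lipB_snd: "lipB ({a..b} \<times> {c..d}) (\<lambda>x. snd x)"
  unfolding lipB_def by (intro exI[of _ 1] exI[of _ "\<bar>c\<bar> + \<bar>d\<bar>"]) auto

lemma lipB_add: "lipB S f \<Longrightarrow> lipB S g \<Longrightarrow> lipB S (\<lambda>x. f x + g x)"
  unfolding lipB_def
proof (elim exE)
  fix K1 M1 K2 M2
  assume f: "\<forall>x\<in>S. \<forall>y\<in>S. \<bar>f x\<bar> \<le> M1 \<and> \<bar>f x - f y\<bar> \<le> K1 * (\<bar>fst x - fst y\<bar> + \<bar>snd x - snd y\<bar>)"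
    and g: "\<forall>x\<in>S. \<forall>y\<in>S. \<bar>g x\<bar> \<le> M2 \<and> \<bar>g x - g y\<bar> \<le> K2 * (\<bar>fst x - fst y\<bar> + \<bar>snd x - snd y\<bar>)"
  show "\<exists>K M. \<forall>x\<in>S. \<forall>y\<in>S. \<bar>f x + g x\<bar> \<le> M \<and> \<bar>f x + g x - (f y + g y)\<bar> \<le> K * (\<bar>fst x - fst y\<bar> + \<bar>snd x - snd y\<bar>)"
  proof (intro exI ballI conjI)
    fix x y assume xy: "x \<in> S" "y \<in> S"
    show "\<bar>f x + g x\<bar> \<le> M1 + M2" using f g xy by (meson abs_triangle_ineq add_mono order_trans)
    have "\<bar>f x + g x - (f y + g y)\<bar> \<le> \<bar>f x - f y\<bar> + \<bar>g x - g y\<bar>" by linarith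
    also have "\<dots> \<le> K1 * (\<bar>fst x - fst y\<bar> + \<bar>snd x - snd y\<bar>) + K2 * (\<bar>fst x - fst y\<bar> + \<bar>snd x - snd y\<bar>)"
      using f g xy by (intro add_mono) auto
    finally show "\<bar>f x + g x - (f y + g y)\<bar> \<le> (K1 + K2) * (\<bar>fst x - fst y\<bar> + \<bar>snd x - snd y\<bar>)"
      by (simp add: distrib_right)
  qed
qed

lemma lipB_mult: "lipB S f \<Longrightarrow> lipB S g \<Longrightarrow> lipB S (\<lambda>x. f x * g x)"
  unfolding lipB_def
proof (elim exE)
  fix K1 M1 K2 M2
  assume f: "\<forall>x\<in>S. \<forall>y\<in>S. \<bar>f x\<bar> \<le> M1 \<and> \<bar>f x - f y\<bar> \<le> K1 * (\<bar>fst x - fst y\<bar> + \<bar>snd x - snd y\<bar>)"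
    and g: "\<forall>x\<in>S. \<forall>y\<in>S. \<bar>g x\<bar> \<le> M2 \<and> \<bar>g x - g y\<bar> \<le> K2 * (\<bar>fst x - fst y\<bar> + \<bar>snd x - snd y\<bar>)"
  show "\<exists>K M. \<forall>x\<in>S. \<forall>y\<in>S. \<bar>f x * g x\<bar> \<le> M \<and> \<bar>f x * g x - f y * g y\<bar> \<le> K * (\<bar>fst x - fst y\<bar> + \<bar>snd x - snd y\<bar>)"
  proof (intro exI ballI conjI)
    fix x y assume xy: "x \<in> S" "y \<in> S"
    let ?D = "\<bar>fst x - fst y\<bar> + \<bar>snd x - snd y\<bar>"
    have fx: "\<bar>f x\<bar> \<le> M1" and gy: "\<bar>g y\<bar> \<le> M2" and gx: "\<bar>g x\<bar> \<le> M2"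
      and df: "\<bar>f x - f y\<bar> \<le> K1 * ?D" and dg: "\<bar>g x - g y\<bar> \<le> K2 * ?D"
      using f g xy by auto
    have M1: "0 \<le> M1" using fx by linarith
    have M2: "0 \<le> M2" using gx by linarith
    show "\<bar>f x * g x\<bar> \<le> M1 * M2" unfolding abs_mult using fx gx M1 by (intro mult_mono) auto
    have "f x * g x - f y * g y = f x * (g x - g y) + g y * (f x - f y)" by (simp add: algebra_simps)
    then have "\<bar>f x * g x - f y * g y\<bar> \<le> \<bar>f x\<bar> * \<bar>g x - g y\<bar> + \<bar>g y\<bar> * \<bar>f x - f y\<bar>"
      by (metis abs_mult abs_triangle_ineq)
    also have "\<dots> \<le> M1 * (K2 * ?D) + M2 * (K1 * ?D)"
      using fx gy df dg M1 M2 by (intro add_mono mult_mono) auto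
    finally show "\<bar>f x * g x - f y * g y\<bar> \<le> (M1 * K2 + M2 * K1) * ?D"
      by (simp add: algebra_simps)
  qed
qed

lemma lipB_uminus: "lipB S f \<Longrightarrow> lipB S (\<lambda>x. - f x)"
  using lipB_mult[OF lipB_const[of S "-1"], of f] by simp

lemma lipB_diff: "lipB S f \<Longrightarrow> lipB S g \<Longrightarrow> lipB S (\<lambda>x. f x - g x)"
  using lipB_add[of S f "\<lambda>x. - g x"] lipB_uminus[of S g] by simp

lemma lipB_divc: "lipB S f \<Longrightarrow> lipB S (\<lambda>x. f x / a)"
  using lipB_mult[OF _ lipB_const[of S "1/a"], of f] by simp

lemma lipB_pow2: "lipB S f \<Longrightarrow> lipB S (\<lambda>x. (f x)^2)"
  using lipB_mult[of S f f] by (simp add: power2_eq_square)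

lemma lipB_inv_fst:
  assumes a: "0 < a"
  shows "lipB ({a..b} \<times> {c..d}) (\<lambda>x. 1 / fst x)"
  unfolding lipB_def
proof (intro exI ballI conjI)
  fix x y :: "real \<times> real" assume xy: "x \<in> {a..b} \<times> {c..d}" "y \<in> {a..b} \<times> {c..d}"
  then have x: "fst x \<ge> a" and y: "fst y \<ge> a" by auto
  show "\<bar>1 / fst x\<bar> \<le> 1 / a" using x a by (simp add: frac_le)
  have "\<bar>1 / fst x - 1 / fst y\<bar> = \<bar>fst x - fst y\<bar> / (fst x * fst y)"
    using x y a by (simp add: field_simps abs_div)
  also have "\<dots> \<le> \<bar>fst x - fst y\<bar> / (a * a)"
    using x y a by (intro divide_left_mono mult_mono) auto
  also have "\<dots> \<le> (1 / (a * a)) * (\<bar>fst x - fst y\<bar> + \<bar>snd x - snd y\<bar>)"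
    using a by (simp add: divide_right_mono)
  finally show "\<bar>1 / fst x - 1 / fst y\<bar> \<le> (1 / (a * a)) * (\<bar>fst x - fst y\<bar> + \<bar>snd x - snd y\<bar>)" .
qed

lemmas lipB_intros = lipB_const lipB_fst lipB_snd lipB_add lipB_mult lipB_uminus lipB_diff
  lipB_divc lipB_pow2

lemma lipB_FV: "lipB ({a..b} \<times> {c..d}) (\<lambda>x. FV (fst x) (snd x))"
  unfolding FV_def by (intro lipB_intros)

lemma lipB_FP: "0 < a \<Longrightarrow> lipB ({a..b} \<times> {c..d}) (\<lambda>x. FP (fst x) (snd x))"
  unfolding FP_def Rf_def Qf_def by (intro lipB_intros lipB_inv_fst)



lemma decay:
  fixes p v :: "real \<Rightarrow> real"
  assumes m: "m > 0"
    and dp: "\<And>t. t \<ge> 0 \<Longrightarrow> (p has_real_derivative (p t * (p t * Rf (v t) - Qf (v t)))) (at t within {0..})"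
    and neg: "\<And>t. t \<ge> 0 \<Longrightarrow> p t * Rf (v t) - Qf (v t) \<le> - m"
  shows "(p \<longlongrightarrow> 0) at_top"
proof -
  define h where "h t = (p t)^2 * exp (2*m*t)" for t
  have dh: "(h has_real_derivative 2 * (p t)^2 * exp (2*m*t) * (p t * Rf (v t) - Qf (v t) + m)) (at t within {0..})"
    if t: "t \<ge> 0" for t
    unfolding h_def
    by (rule derivative_eq_intros dp[OF t] refl)+ (simp add: algebra_simps power2_eq_square)
  have hle: "h t \<le> h 0" if t: "t \<ge> 0" for t
  proof -
    have "- h 0 \<le> - h t"
    proof (rule DERIV_nonneg_imp_increasing_open[OF t])
      fix x assume x: "0 < x" "x < t"
      have "at x within {0..} = at x"
      proof -
        have "{0..} \<inter> {0<..} - {x} = {0<..} - {x}" by auto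
        then show ?thesis using at_within_nhd[of x "{0<..}" "{0..}" UNIV] x by auto
      qed
      then have "(h has_real_derivative 2 * (p x)^2 * exp (2*m*x) * (p x * Rf (v x) - Qf (v x) + m)) (at x)"
        using dh[of x] x by simp
      then have "((\<lambda>x. - h x) has_real_derivative - (2 * (p x)^2 * exp (2*m*x) * (p x * Rf (v x) - Qf (v x) + m))) (at x)"
        by (rule DERIV_minus)
      moreover have "2 * (p x)^2 * exp (2*m*x) * (p x * Rf (v x) - Qf (v x) + m) \<le> 0"
        using neg[of x] x by (intro mult_nonneg_nonpos) auto
      ultimately show "\<exists>y. ((\<lambda>x. - h x) has_real_derivative y) (at x) \<and> 0 \<le> y" by force
    next
      show "continuous_on {0..t} (\<lambda>x. - h x)"
        unfolding continuous_on_eq_continuous_within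
      proof
        fix x assume x: "x \<in> {0..t}"
        have "continuous (at x within {0..}) h" using DERIV_continuous[OF dh[of x]] x by simp
        then have "continuous (at x within {0..t}) h" by (rule continuous_within_subset) auto
        then show "continuous (at x within {0..t}) (\<lambda>x. - h x)" by (intro continuous_intros)
      qed
    qed
    then show ?thesis by simp
  qed
  have bnd: "(p t)^2 \<le> (p 0)^2 * exp (- (2*m) * t)" if t: "t \<ge> 0" for t
  proof -
    have h1: "(p t)^2 * exp (2*m*t) \<le> (p 0)^2" using hle[OF t] by (simp add: h_def)
    have "(p t)^2 = ((p t)^2 * exp (2*m*t)) * exp (- (2*m) * t)"
      by (simp add: mult.assoc exp_add[symmetric])
    also have "\<dots> \<le> (p 0)^2 * exp (- (2*m) * t)"
      by (rule mult_right_mono[OF h1]) simp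
    finally show ?thesis .
  qed
  have lim0: "((\<lambda>t::real. (p 0)^2 * exp (- (2*m) * t)) \<longlongrightarrow> 0) at_top"
    using m by real_asymp
  have sq: "((\<lambda>t. (p t)^2) \<longlongrightarrow> 0) at_top"
  proof (rule tendsto_sandwich[OF _ _ tendsto_const lim0])
    show "\<forall>\<^sub>F t in at_top. 0 \<le> (p t)^2" by simp
    show "\<forall>\<^sub>F t in at_top. (p t)^2 \<le> (p 0)^2 * exp (- (2*m) * t)"
      using eventually_ge_at_top[of 0] by eventually_elim (rule bnd)
  qed
  have "((\<lambda>t. sqrt ((p t)^2)) \<longlongrightarrow> sqrt 0) at_top"
    by (rule tendsto_real_sqrt[OF sq])
  then have "((\<lambda>t. \<bar>p t\<bar>) \<longlongrightarrow> 0) at_top" by simp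
  then show ?thesis by (simp add: tendsto_rabs_zero_iff)
qed



lemma clamp1: "\<bar>max a (min b (u::real)) - max a (min b u')\<bar> \<le> \<bar>u - u'\<bar>"
  by (simp add: max_def min_def abs_if)

lemma clamp_lip:
  fixes g :: "real \<times> real \<Rightarrow> real"
  assumes g: "lipB ({a..b} \<times> {c..d}) g" and ab: "a \<le> b" and cd: "c \<le> d"
  shows "\<exists>K\<ge>0. \<forall>x y. \<bar>g (max a (min b (fst x)), max c (min d (snd x))) - g (max a (min b (fst y)), max c (min d (snd y)))\<bar>
            \<le> K * (\<bar>fst x - fst y\<bar> + \<bar>snd x - snd y\<bar>)"
proof -
  obtain K M where KM: "\<forall>x\<in>{a..b} \<times> {c..d}. \<forall>y\<in>{a..b} \<times> {c..d}. \<bar>g x\<bar> \<le> M \<and> \<bar>g x - g y\<bar> \<le> K * (\<bar>fst x - fst y\<bar> + \<bar>snd x - snd y\<bar>)"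
    using g unfolding lipB_def by blast
  show ?thesis
  proof (intro exI[of _ "\<bar>K\<bar>"] conjI allI)
    fix x y :: "real \<times> real"
    let ?cx = "(max a (min b (fst x)), max c (min d (snd x)))"
    let ?cy = "(max a (min b (fst y)), max c (min d (snd y)))"
    have in1: "?cx \<in> {a..b} \<times> {c..d}" "?cy \<in> {a..b} \<times> {c..d}" using ab cd by auto
    have "\<bar>g ?cx - g ?cy\<bar> \<le> K * (\<bar>fst ?cx - fst ?cy\<bar> + \<bar>snd ?cx - snd ?cy\<bar>)" using KM in1 by blast
    also have "\<dots> \<le> \<bar>K\<bar> * (\<bar>fst ?cx - fst ?cy\<bar> + \<bar>snd ?cx - snd ?cy\<bar>)" by (intro mult_right_mono) auto
    also have "\<dots> \<le> \<bar>K\<bar> * (\<bar>fst x - fst y\<bar> + \<bar>snd x - snd y\<bar>)"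
      by (intro mult_left_mono add_mono) (auto simp: clamp1)
    finally show "\<bar>g ?cx - g ?cy\<bar> \<le> \<bar>K\<bar> * (\<bar>fst x - fst y\<bar> + \<bar>snd x - snd y\<bar>)" .
  qed simp
qed

lemma pair_lip:
  fixes g1 g2 :: "real \<times> real \<Rightarrow> real"
  assumes "\<exists>K\<ge>0. \<forall>x y. \<bar>g1 x - g1 y\<bar> \<le> K * (\<bar>fst x - fst y\<bar> + \<bar>snd x - snd y\<bar>)"
    and "\<exists>K\<ge>0. \<forall>x y. \<bar>g2 x - g2 y\<bar> \<le> K * (\<bar>fst x - fst y\<bar> + \<bar>snd x - snd y\<bar>)"
  shows "\<exists>L>0. \<forall>x y. norm ((g1 x, g2 x) - (g1 y, g2 y)) \<le> L * norm (x - y)"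
proof -
  obtain K1 K2 where K: "K1 \<ge> 0" "K2 \<ge> 0"
    "\<forall>x y. \<bar>g1 x - g1 y\<bar> \<le> K1 * (\<bar>fst x - fst y\<bar> + \<bar>snd x - snd y\<bar>)"
    "\<forall>x y. \<bar>g2 x - g2 y\<bar> \<le> K2 * (\<bar>fst x - fst y\<bar> + \<bar>snd x - snd y\<bar>)"
    using assms by blast
  show ?thesis
  proof (intro exI[of _ "2 * (K1 + K2) + 1"] conjI allI)
    fix x y :: "real \<times> real"
    let ?D = "\<bar>fst x - fst y\<bar> + \<bar>snd x - snd y\<bar>"
    have f: "\<bar>fst x - fst y\<bar> \<le> norm (x - y)" using norm_fst_le[of "fst x - fst y" "snd x - snd y"]
      by (cases x, cases y) simp
    have s: "\<bar>snd x - snd y\<bar> \<le> norm (x - y)" using norm_snd_le[of "snd x - snd y" "fst x - fst y"]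
      by (cases x, cases y) simp
    have "norm ((g1 x, g2 x) - (g1 y, g2 y)) = norm (g1 x - g1 y, g2 x - g2 y)" by simp
    also have "\<dots> \<le> \<bar>g1 x - g1 y\<bar> + \<bar>g2 x - g2 y\<bar>" using norm_Pair_le[of "g1 x - g1 y" "g2 x - g2 y"] by simp
    also have "\<dots> \<le> K1 * ?D + K2 * ?D" using K(3)[rule_format, of x y] K(4)[rule_format, of x y] by (rule add_mono)
    also have "\<dots> = (K1 + K2) * ?D" by (simp add: algebra_simps)
    also have "\<dots> \<le> (K1 + K2) * (2 * norm (x - y))" using f s K by (intro mult_left_mono) auto
    also have "\<dots> \<le> (2 * (K1 + K2) + 1) * norm (x - y)" by (simp add: algebra_simps)
    finally show "norm ((g1 x, g2 x) - (g1 y, g2 y)) \<le> (2 * (K1 + K2) + 1) * norm (x - y)" .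
  qed (use K in auto)
qed

lemma neg_rate:
  assumes K: "inK c vlo vhi v p" and lo: "0 < vlo" and c: "0 < c"
  shows "p * Rf v - Qf v \<le> - min vlo (1 / vhi)"
proof -
  have K1: "vlo \<le> v" and K2: "v \<le> vhi" and K3: "p \<le> max 1 (1 + c * (v - 1))"
    and K4: "min (-1) (-1 - c * (1 / v - 1)) \<le> p" using K by (auto simp: inK_def)
  have v: "v > 0" using K1 lo by simp
  have eq: "p * Rf v - Qf v = (p * (1 - v^2) - (1 + v^2)) / (2 * v)"
    unfolding Rf_def Qf_def using v by (simp add: field_simps power2_eq_square)
  show ?thesis
  proof (cases "v \<le> 1")
    case True
    have "c * (v - 1) \<le> 0" using True c by (intro mult_nonneg_nonpos) auto
    then have "p \<le> 1" using K3 by (simp add: max_def split: if_splits)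
    moreover have "v^2 \<le> 1" using True v by (intro power_le_one) auto
    ultimately have "p * (1 - v^2) \<le> 1 * (1 - v^2)" by (intro mult_right_mono) auto
    then have num: "p * (1 - v^2) - (1 + v^2) \<le> (- v) * (2 * v)" by (simp add: power2_eq_square)
    have "p * Rf v - Qf v \<le> - v" unfolding eq using v num by (subst divide_le_eq) auto
    then show ?thesis using K1 by linarith
  next
    case False
    have "1 / v \<le> 1" using False v by simp
    then have "c * (1 / v - 1) \<le> 0" using c by (intro mult_nonneg_nonpos) auto
    then have "p \<ge> -1" using K4 by (simp add: min_def split: if_splits)
    moreover have "1 \<le> v^2" using False by (intro one_le_power) auto
    ultimately have "p * (1 - v^2) \<le> (-1) * (1 - v^2)" by (intro mult_right_mono_neg) auto
    moreover have "(- 1 / v) * (2 * v) = -2" using v by simp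
    ultimately have num: "p * (1 - v^2) - (1 + v^2) \<le> (- 1 / v) * (2 * v)" by simp
    have "p * Rf v - Qf v \<le> - 1 / v" unfolding eq using v num by (subst divide_le_eq) auto
    moreover have "1 / v \<ge> 1 / vhi" using K2 v by (simp add: frac_le)
    ultimately show ?thesis by linarith
  qed
qed


lemma c_bound:
  fixes c :: real
  assumes "0 < c" "c < (3 + sqrt 73) / 8"
  shows "4*c^2 - 3*c - 4 < 0"
proof (cases "8*c - 3 \<ge> 0")
  case True
  have "8*c - 3 < sqrt 73" using assms by simp
  then have "(8*c - 3)^2 < (sqrt 73)^2" using True by (intro power_strict_mono) auto
  then have "(8*c - 3)^2 < 73" by simp
  then show ?thesis by (simp add: power2_eq_square algebra_simps)
next
  case False
  then have "c < 3/8" by simp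
  then have "c * c < 1 * 1" using assms by (intro mult_strict_mono) auto
  then show ?thesis using assms by (simp add: power2_eq_square)
qed

lemma p1_eq: "0 < c \<Longrightarrow> p1 c v = max 1 (1 + c * (v - 1))"
proof -
  assume c: "0 < c"
  show ?thesis
  proof (cases "v \<ge> 1")
    case True
    then have "c * (v - 1) \<ge> 0" using c by simp
    then show ?thesis using True unfolding p1_def heaviside_def by (simp add: max_def)
  next
    case False
    then have "c * (v - 1) < 0" using c by (simp add: mult_pos_neg)
    then show ?thesis using False unfolding p1_def heaviside_def by (simp add: max_def)
  qed
qed

lemma p2_eq: "0 < c \<Longrightarrow> 0 < v \<Longrightarrow> p2 c v = min (-1) (-1 - c * (1 / v - 1))"
proof -
  assume c: "0 < c" and v: "0 < v"
  show ?thesis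
  proof (cases "v \<le> 1")
    case True
    then have "1 / v - 1 \<ge> 0" using v by simp
    then have "c * (1 / v - 1) \<ge> 0" using c by simp
    then show ?thesis using True unfolding p2_def heaviside_def by (simp add: min_def)
  next
    case False
    then have "1 / v - 1 < 0" using v by simp
    then have "c * (1 / v - 1) < 0" using c by (simp add: mult_pos_neg)
    then show ?thesis using False unfolding p2_def heaviside_def by (simp add: min_def)
  qed
qed

theorem theorem3p8:
  fixes c1 v0 p0 :: real
  assumes "0 < c1" and "c1 < (3 + sqrt 73) / 8"
    and "(v0, p0) \<in> Omega c1"
  shows "\<exists>v p :: real \<Rightarrow> real.
     v 0 = v0 \<and> p 0 = p0 \<and>
     (\<forall>t\<ge>0. v t > 0) \<and>
     (\<forall>t\<ge>0. (p has_real_derivative (p t * (p t * Rf (v t) - Qf (v t)))) (at t within {0..})) \<and>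
     (\<forall>t\<ge>0. (v has_real_derivative (- p t / 4 * (1 + (v t)\<^sup>2) + (1 - (v t)\<^sup>2) / 2)) (at t within {0..})) \<and>
     (\<forall>t\<ge>0. (v t, p t) \<in> Omega c1) \<and>
     (\<exists>a b. 0 < a \<and> (\<forall>t\<ge>0. a \<le> v t \<and> v t \<le> b)) \<and>
     (p \<longlongrightarrow> 0) at_top"
proof -
  note c1 = assms(1)
  have cb: "4*c1^2 - 3*c1 - 4 < 0" by (rule c_bound[OF assms(1,2)])
  have v0: "v0 > 0" and p0: "p2 c1 v0 \<le> p0" "p0 \<le> p1 c1 v0" using assms(3) by (auto simp: Omega_def)
  define vlo where "vlo = min v0 (1/2)"
  define vhi where "vhi = max v0 2"
  define plo where "plo = -1 - c1 * (1 / vlo - 1)"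
  define phi where "phi = 1 + c1 * (vhi - 1)"
  have lo: "0 < vlo" "vlo \<le> 1/2" using v0 by (auto simp: vlo_def)
  have hi: "2 \<le> vhi" by (simp add: vhi_def)
  have K0: "inK c1 vlo vhi v0 p0"
    using p0 p1_eq[OF c1, of v0] p2_eq[OF c1 v0] by (auto simp: inK_def vlo_def vhi_def)
  have vloi: "1 / vlo \<ge> 2" using lo by (simp add: field_simps)
  have plo_le: "plo \<le> -1" unfolding plo_def using vloi c1 by simp
  have phi_ge: "1 \<le> phi" unfolding phi_def using hi c1 by simp
  define cl where "cl x = (max vlo (min vhi (fst x)), max plo (min phi (snd x)))" for x :: "real \<times> real"
  define G where "G x = (FV (fst (cl x)) (snd (cl x)), FP (fst (cl x)) (snd (cl x)))" for x
  have ab: "vlo \<le> vhi" "plo \<le> phi" using lo hi plo_le phi_ge by auto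
  have l1: "\<exists>K\<ge>0. \<forall>x y. \<bar>FV (fst (cl x)) (snd (cl x)) - FV (fst (cl y)) (snd (cl y))\<bar>
      \<le> K * (\<bar>fst x - fst y\<bar> + \<bar>snd x - snd y\<bar>)"
    using clamp_lip[OF lipB_FV ab] unfolding cl_def by simp
  have l2: "\<exists>K\<ge>0. \<forall>x y. \<bar>FP (fst (cl x)) (snd (cl x)) - FP (fst (cl y)) (snd (cl y))\<bar>
      \<le> K * (\<bar>fst x - fst y\<bar> + \<bar>snd x - snd y\<bar>)"
    using clamp_lip[OF lipB_FP[OF lo(1)] ab] unfolding cl_def by simp
  have "\<exists>L>0. \<forall>x y. norm ((FV (fst (cl x)) (snd (cl x)), FP (fst (cl x)) (snd (cl x)))
     - (FV (fst (cl y)) (snd (cl y)), FP (fst (cl y)) (snd (cl y)))) \<le> L * norm (x - y)"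
    by (rule pair_lip[OF l1 l2])
  then obtain L where L: "L > 0" "\<And>x y. norm (G x - G y) \<le> L * norm (x - y)"
    unfolding G_def by blast
  obtain Y where Y: "Y 0 = (v0, p0)" "\<And>t. t \<ge> 0 \<Longrightarrow> (Y has_vector_derivative G (Y t)) (at t within {0..})"
    using picard_exists[OF L(2) L(1), of "(v0, p0)"] by blast
  define v where "v t = fst (Y t)" for t
  define p where "p t = snd (Y t)" for t
  have dv: "(v has_real_derivative fst (G (Y t))) (at t within {0..})" if "t \<ge> 0" for t
  proof -
    have "((\<lambda>t. fst (Y t)) has_derivative (\<lambda>h. fst (h *\<^sub>R G (Y t)))) (at t within {0..})"
      using Y(2)[OF that] unfolding has_vector_derivative_def by (rule has_derivative_fst)
    then show ?thesis unfolding v_def has_field_derivative_def by (simp add: mult.commute[of _ "fst (G (Y t))"])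
  qed
  have dp: "(p has_real_derivative snd (G (Y t))) (at t within {0..})" if "t \<ge> 0" for t
  proof -
    have "((\<lambda>t. snd (Y t)) has_derivative (\<lambda>h. snd (h *\<^sub>R G (Y t)))) (at t within {0..})"
      using Y(2)[OF that] unfolding has_vector_derivative_def by (rule has_derivative_snd)
    then show ?thesis unfolding p_def has_field_derivative_def by (simp add: mult.commute[of _ "snd (G (Y t))"])
  qed
  have clK: "cl (Y t) = Y t" if K: "inK c1 vlo vhi (v t) (p t)" for t
  proof -
    have K1: "vlo \<le> v t" and K2: "v t \<le> vhi" and K3: "p t \<le> max 1 (1 + c1 * (v t - 1))"
      and K4: "min (-1) (-1 - c1 * (1 / v t - 1)) \<le> p t" using K by (auto simp: inK_def)
    have "1 + c1 * (v t - 1) \<le> phi" unfolding phi_def using K2 c1 by (simp add: mult_left_mono)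
    then have pp: "p t \<le> phi" using K3 phi_ge by linarith
    have "1 / v t \<le> 1 / vlo" using K1 lo by (simp add: frac_le)
    then have "-1 - c1 * (1 / v t - 1) \<ge> plo" unfolding plo_def using c1 by (simp add: mult_left_mono)
    then have pl: "p t \<ge> plo" using K4 plo_le by linarith
    show ?thesis using K1 K2 pp pl unfolding cl_def v_def p_def by (simp add: prod_eq_iff)
  qed
  have eqK: "fst (G (Y t)) = FV (v t) (p t) \<and> snd (G (Y t)) = FP (v t) (p t)"
    if "inK c1 vlo vhi (v t) (p t)" for t
    using clK[OF that] unfolding G_def v_def p_def by simp
  have inv: "\<forall>t\<ge>0. inK c1 vlo vhi (v t) (p t)"
    by (rule global_inv[OF c1 cb lo hi dv dp eqK]) (use K0 Y(1) in \<open>auto simp: v_def p_def\<close>)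
  have dv': "(v has_real_derivative (- p t / 4 * (1 + (v t)\<^sup>2) + (1 - (v t)\<^sup>2) / 2)) (at t within {0..})"
    if "t \<ge> 0" for t
    using dv[OF that] eqK[OF inv[rule_format, OF that]] by (simp add: FV_def)
  have dp': "(p has_real_derivative (p t * (p t * Rf (v t) - Qf (v t)))) (at t within {0..})"
    if "t \<ge> 0" for t
    using dp[OF that] eqK[OF inv[rule_format, OF that]] by (simp add: FP_def)
  have vpos: "v t \<ge> vlo" "v t \<le> vhi" if "t \<ge> 0" for t
    using inv that by (auto simp: inK_def)
  have om: "(v t, p t) \<in> Omega c1" if "t \<ge> 0" for t
  proof -
    have vt: "v t > 0" using vpos[OF that] lo by simp
    show ?thesis using inv that p1_eq[OF c1, of "v t"] p2_eq[OF c1 vt] vt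
      by (auto simp: Omega_def inK_def)
  qed
  have m: "min vlo (1 / vhi) > 0" using lo hi by simp
  have lim: "(p \<longlongrightarrow> 0) at_top"
    by (rule decay[OF m dp']) (use neg_rate inv lo c1 in auto)
  have v00: "v 0 = v0" "p 0 = p0" using Y(1) by (auto simp: v_def p_def)
  have ab: "\<exists>a b. 0 < a \<and> (\<forall>t\<ge>0. a \<le> v t \<and> v t \<le> b)"
    using vpos lo by (intro exI[of _ vlo] exI[of _ vhi]) auto
  have vp: "\<forall>t\<ge>0. v t > 0" using vpos lo by (meson less_le_trans)
  show ?thesis
    by (rule exI[of _ v], rule exI[of _ p]) (use v00 ab vp dv' dp' om lim in blast)
qed


end
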